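(* Let $E$ be a countable set, $\Omega=[0,1]^E$ with its Borel $\sigma$-field $\mathcal F$ and the product $\mathbb P$ of uniform measures. Let $\mathcal A,\mathcal B\in\mathcal F$, $a,b\in(0,1)$, $s\in\mathbb N$, and let $\Phi:\mathcal A\to\mathcal B$ be measurable. Suppose that for every $\omega'\in\Phi(\mathcal A)$ there is a set $S=S(\omega')\subset E$ with at most $s$ elements such that $$\Phi^{-1}(\omega')\subset\{\omega:\omega|_{S^c}=\omega'|_{S^c}\}\cap\bigcup_{L\subset S}\Big(\{\omega:\omega|_L=\tfrac1a\,\omega'|_L\}\cap\{\omega:\omega|_{S\setminus L}=\tfrac{\omega'-b}{1-b}\big|_{S\setminus L}\}\Big).$$ Then $\mathbb P[\mathcal A]\le\Big(\frac{2}{a\wedge(1-b)}\Big)^s\mathbb P[\mathcal B]$.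
   Context: For $\omega\in[0,1]^E$ and $S\subset E$, $\omega|_S$ denotes the restriction of $\omega$ to $S$; arithmetic operations on restrictions act coordinatewise. *)

theory Defs
  imports "HOL-Probability.Probability"
begin

definition unit_interval_measure :: "real measure" where
  "unit_interval_measure = restrict_space lborel {0..1}"

text \<open>The product probability space Omega = [0,1]^E with the product of uniform
measures. For countable E the product sigma-field equals the Borel sigma-field
of the product topology.\<close>
definition cube_measure :: "'e set \<Rightarrow> ('e \<Rightarrow> real) measure" where
  "cube_measure E = PiM E (\<lambda>_. unit_interval_measure)"

end

theory Submission imports Defs begin


lemma clamp_meas: "(\<lambda>x::real. max 0 (min 1 x)) \<in> measurable borel unit_interval_measure"
  unfolding unit_interval_measure_def
  by (rule measurable_restrict_space2) (auto simp: measurable_lborel2)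

lemma oneD:
  fixes h :: "real \<Rightarrow> ennreal"
  assumes h: "h \<in> borel_measurable unit_interval_measure" and p: "0 \<le> p" and c: "0 < c" "p + c \<le> 1"
  shows "(\<integral>\<^sup>+x. h (p + c*x) \<partial>unit_interval_measure) \<le> ennreal (1/c) * (\<integral>\<^sup>+x. h x \<partial>unit_interval_measure)"
proof -
  define h' where "h' = (\<lambda>x. h (max 0 (min 1 x)))"
  have h'm[measurable]: "h' \<in> borel_measurable borel"
    unfolding h'_def using measurable_compose[OF clamp_meas h] by simp
  define F where "F = (\<lambda>y. h' y * indicator {0..1::real} ((y - p)/c))"
  have Fm[measurable]: "F \<in> borel_measurable borel" unfolding F_def by measurable
  have "(\<integral>\<^sup>+x. h (p + c*x) \<partial>unit_interval_measure) = (\<integral>\<^sup>+x. h (p + c*x) * indicator {0..1} x \<partial>lborel)"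
    unfolding unit_interval_measure_def by (rule nn_integral_restrict_space) simp
  also have "\<dots> = (\<integral>\<^sup>+x. F (p + c*x) \<partial>lborel)"
  proof (rule nn_integral_cong)
    fix x :: real
    show "h (p + c*x) * indicator {0..1} x = F (p + c*x)"
    proof (cases "x \<in> {0..1}")
      case True
      have "0 \<le> c * x" using True c by simp
      moreover have "c * x \<le> c" using True c by (simp add: mult_left_le)
      ultimately have "0 \<le> p + c*x" "p + c*x \<le> 1" using p c(2) by linarith+
      then have "p + c*x \<in> {0..1}" by simp
      then show ?thesis using True c by (simp add: F_def h'_def)
    next
      case False
      then show ?thesis using c by (simp add: F_def)
    qed
  qed
  also have "\<dots> = ennreal (1/c) * (\<integral>\<^sup>+x. F x \<partial>lborel)"
    using nn_integral_real_affine[OF Fm, of c p] c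
    by (simp add: ennreal_mult''[symmetric] mult.assoc[symmetric] ennreal_mult[symmetric] del: ennreal_mult')
  also have "(\<integral>\<^sup>+x. F x \<partial>lborel) \<le> (\<integral>\<^sup>+x. h x * indicator {0..1} x \<partial>lborel)"
  proof (rule nn_integral_mono)
    fix y :: real
    show "F y \<le> h y * indicator {0..1} y"
    proof (cases "(y - p)/c \<in> {0..1}")
      case True
      then have "0 \<le> y - p" "y - p \<le> c" using c by (auto simp: divide_simps)
      then have "y \<in> {0..1}" using p c by auto
      then show ?thesis using True by (simp add: F_def h'_def)
    next
      case False then show ?thesis by (simp add: F_def)
    qed
  qed
  also have "\<dots> = (\<integral>\<^sup>+x. h x \<partial>unit_interval_measure)"
    unfolding unit_interval_measure_def by (rule nn_integral_restrict_space[symmetric]) simp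
  finally show ?thesis by (simp add: mult_left_mono)
qed



lemma probU: "prob_space unit_interval_measure"
  unfolding unit_interval_measure_def
  by (rule prob_spaceI) (simp add: emeasure_restrict_space space_restrict_space)

lemma space_U: "space unit_interval_measure = {0..1}"
  unfolding unit_interval_measure_def by (simp add: space_restrict_space)

lemma space_cube: "space (cube_measure E) = (\<Pi>\<^sub>E i\<in>E. {0..1})"
  unfolding cube_measure_def by (simp add: space_PiM space_U)

lemma prob_cube: "prob_space (cube_measure E)"
  unfolding cube_measure_def by (intro prob_space_PiM probU)

lemma upd_meas:
  assumes e: "e \<in> E"
  shows "(\<lambda>(x,X). X(e:=x)) \<in> measurable (unit_interval_measure \<Otimes>\<^sub>M PiM (E-{e}) (\<lambda>_. unit_interval_measure)) (cube_measure E)"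
proof -
  let ?N = "unit_interval_measure \<Otimes>\<^sub>M PiM (E-{e}) (\<lambda>_. unit_interval_measure)"
  have m: "(\<lambda>z. \<lambda>i\<in>E. if i = e then fst z else snd z i) \<in> measurable ?N (cube_measure E)"
    unfolding cube_measure_def
  proof (rule measurable_restrict)
    fix i assume i: "i \<in> E"
    show "(\<lambda>z. if i = e then fst z else snd z i) \<in> measurable ?N unit_interval_measure"
    proof (cases "i = e")
      case True then show ?thesis by simp
    next
      case False
      then have "i \<in> E - {e}" using i by simp
      then show ?thesis using False
        by (simp add: measurable_compose[OF measurable_snd measurable_component_singleton])
    qed
  qed
  have eq: "(\<lambda>i\<in>E. if i = e then fst z else snd z i) = (case z of (x,X) \<Rightarrow> X(e:=x))"
    if z: "z \<in> space ?N" for z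
  proof -
    obtain x X where zz: "z = (x, X)" by (cases z)
    have X: "X \<in> (\<Pi>\<^sub>E i\<in>E-{e}. space unit_interval_measure)"
      using z zz by (simp add: space_pair_measure space_PiM)
    show ?thesis
    proof
      fix i show "(\<lambda>i\<in>E. if i = e then fst z else snd z i) i = (case z of (x,X) \<Rightarrow> X(e:=x)) i"
        using X e zz by (cases "i \<in> E") (auto simp: PiE_def extensional_def)
    qed
  qed
  show ?thesis by (rule measurable_cong[THEN iffD1, OF eq m])
qed



definition Tm :: "'e set \<Rightarrow> 'e set \<Rightarrow> ('e \<Rightarrow> real) \<Rightarrow> ('e \<Rightarrow> real) \<Rightarrow> ('e \<Rightarrow> real) \<Rightarrow> ('e \<Rightarrow> real)" where
  "Tm E S mp mc w = (\<lambda>i\<in>E. if i \<in> S then mp i + mc i * w i else w i)"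

lemma comp_meas:
  assumes i: "i \<in> E"
  shows "(\<lambda>w. w i) \<in> borel_measurable (cube_measure E)"
proof -
  have "(\<lambda>x. x) \<in> measurable unit_interval_measure borel"
    unfolding unit_interval_measure_def
    using measurable_restrict_space1[OF measurable_ident[of lborel], of "{0..1}"] by (simp add: measurable_lborel2 id_def)
  from measurable_compose[OF measurable_component_singleton[OF i] this]
  show ?thesis unfolding cube_measure_def by simp
qed

lemma Tm_meas:
  assumes good: "\<forall>i\<in>S. 0 \<le> mp i \<and> 0 < mc i \<and> mp i + mc i \<le> 1"
  shows "Tm E S mp mc \<in> measurable (cube_measure E) (cube_measure E)"
proof -
  have "(\<lambda>w. \<lambda>i\<in>E. if i \<in> S then mp i + mc i * w i else w i) \<in> measurable (cube_measure E) (PiM E (\<lambda>_. unit_interval_measure))"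
  proof (rule measurable_restrict)
    fix i assume i: "i \<in> E"
    show "(\<lambda>w. if i \<in> S then mp i + mc i * w i else w i) \<in> measurable (cube_measure E) unit_interval_measure"
    proof (cases "i \<in> S")
      case False then show ?thesis using i
        by (simp add: cube_measure_def measurable_component_singleton)
    next
      case True
      note cm[measurable] = comp_meas[OF i]
      have "(\<lambda>w. mp i + mc i * w i) \<in> measurable (cube_measure E) lborel"
        unfolding measurable_lborel2 by measurable
      moreover have "(\<lambda>w. mp i + mc i * w i) \<in> space (cube_measure E) \<rightarrow> {0..1}"
      proof
        fix w assume "w \<in> space (cube_measure E)"
        then have w: "0 \<le> w i" "w i \<le> 1" using i by (auto simp: space_cube)
        have g: "0 \<le> mp i" "0 < mc i" "mp i + mc i \<le> 1" using good True by auto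
        have "0 \<le> mc i * w i" using g w by simp
        moreover have "mc i * w i \<le> mc i" using g w by (simp add: mult_left_le)
        ultimately have "0 \<le> mp i + mc i * w i" "mp i + mc i * w i \<le> 1" using g by linarith+
        then show "mp i + mc i * w i \<in> {0..1}" by simp
      qed
      ultimately show ?thesis using True unfolding unit_interval_measure_def
        by (simp add: measurable_restrict_space2)
    qed
  qed
  then show ?thesis unfolding Tm_def[abs_def] cube_measure_def by simp
qed

lemma one_coord:
  fixes g :: "('e \<Rightarrow> real) \<Rightarrow> ennreal"
  assumes e: "e \<in> E" and p: "0 \<le> p" and c: "0 < c" "p + c \<le> 1"
    and g[measurable]: "g \<in> borel_measurable (cube_measure E)"
  shows "(\<integral>\<^sup>+w. g (w(e := p + c * w e)) \<partial>cube_measure E) \<le> ennreal (1/c) * (\<integral>\<^sup>+w. g w \<partial>cube_measure E)"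
proof -
  let ?U = unit_interval_measure
  let ?P' = "PiM (E-{e}) (\<lambda>_. ?U)"
  let ?h = "\<lambda>(x,X). X(e:=x)"
  interpret U: prob_space ?U by (rule probU)
  interpret P': prob_space ?P' by (intro prob_space_PiM probU)
  interpret UP: pair_sigma_finite ?U ?P' by unfold_locales
  have hm[measurable]: "?h \<in> measurable (?U \<Otimes>\<^sub>M ?P') (cube_measure E)" by (rule upd_meas[OF e])
  have D: "distr (?U \<Otimes>\<^sub>M ?P') (cube_measure E) ?h = cube_measure E"
  proof -
    have "distr (?U \<Otimes>\<^sub>M ?P') (PiM (insert e (E-{e})) (\<lambda>_. ?U)) ?h = PiM (insert e (E-{e})) (\<lambda>_. ?U)"
      by (rule distr_pair_PiM_eq_PiM) (auto intro: probU)
    then show ?thesis using e by (simp add: insert_absorb cube_measure_def)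
  qed
  have split: "(\<integral>\<^sup>+w. f w \<partial>cube_measure E) = (\<integral>\<^sup>+X. (\<integral>\<^sup>+x. f (X(e:=x)) \<partial>?U) \<partial>?P')"
    if f[measurable]: "f \<in> borel_measurable (cube_measure E)" for f :: "_ \<Rightarrow> ennreal"
  proof -
    have fm: "(\<lambda>z. f (?h z)) \<in> borel_measurable (?U \<Otimes>\<^sub>M ?P')"
      by (rule measurable_compose[OF hm f])
    have "(\<integral>\<^sup>+w. f w \<partial>cube_measure E) = (\<integral>\<^sup>+w. f w \<partial>distr (?U \<Otimes>\<^sub>M ?P') (cube_measure E) ?h)"
      by (simp add: D)
    also have "\<dots> = (\<integral>\<^sup>+z. f (?h z) \<partial>(?U \<Otimes>\<^sub>M ?P'))"
      by (rule nn_integral_distr[OF hm]) simp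
    also have "\<dots> = (\<integral>\<^sup>+X. (\<integral>\<^sup>+x. f (?h (x,X)) \<partial>?U) \<partial>?P')"
      by (rule UP.nn_integral_snd[OF fm, symmetric])
    finally show ?thesis by simp
  qed
  have innerm: "(\<lambda>X. \<integral>\<^sup>+x. f (X(e:=x)) \<partial>?U) \<in> borel_measurable ?P'"
    if f[measurable]: "f \<in> borel_measurable (cube_measure E)" for f :: "_ \<Rightarrow> ennreal"
  proof -
    have fm: "(\<lambda>z. f (?h z)) \<in> borel_measurable (?U \<Otimes>\<^sub>M ?P')"
      by (rule measurable_compose[OF hm f])
    from U.borel_measurable_nn_integral_fst[OF measurable_pair_swap[OF fm]]
    show ?thesis by simp
  qed
  have gT: "(\<lambda>w. g (w(e := p + c * w e))) \<in> borel_measurable (cube_measure E)"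
  proof -
    have "(\<lambda>w. w(e := p + c * w e)) \<in> measurable (cube_measure E) (cube_measure E)"
    proof (rule measurable_cong[THEN iffD1, OF _ Tm_meas[of "{e}" "\<lambda>_. p" "\<lambda>_. c"]])
      fix w assume "w \<in> space (cube_measure E)"
      then have "w \<in> extensional E" by (simp add: space_cube PiE_def)
      then show "Tm E {e} (\<lambda>_. p) (\<lambda>_. c) w = w(e := p + c * w e)"
        using e by (auto simp: Tm_def fun_eq_iff extensional_def)
    qed (use p c in auto)
    then show ?thesis by (rule measurable_compose) (rule g)
  qed
  have "(\<integral>\<^sup>+w. g (w(e := p + c * w e)) \<partial>cube_measure E) = (\<integral>\<^sup>+X. (\<integral>\<^sup>+x. g (X(e:=p + c * x)) \<partial>?U) \<partial>?P')"
    using split[OF gT] by simp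
  also have "\<dots> \<le> (\<integral>\<^sup>+X. ennreal (1/c) * (\<integral>\<^sup>+x. g (X(e:=x)) \<partial>?U) \<partial>?P')"
  proof (rule nn_integral_mono)
    fix X assume X: "X \<in> space ?P'"
    have "(\<lambda>x. g (X(e:=x))) \<in> borel_measurable ?U"
      using measurable_compose[OF measurable_Pair2'[OF X] hm] g by (simp add: measurable_compose)
    then show "(\<integral>\<^sup>+x. g (X(e:=p + c * x)) \<partial>?U) \<le> ennreal (1/c) * (\<integral>\<^sup>+x. g (X(e:=x)) \<partial>?U)"
      by (rule oneD[OF _ p c])
  qed
  also have "\<dots> = ennreal (1/c) * (\<integral>\<^sup>+X. (\<integral>\<^sup>+x. g (X(e:=x)) \<partial>?U) \<partial>?P')"
    by (rule nn_integral_cmult[OF innerm[OF g]])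
  also have "\<dots> = ennreal (1/c) * (\<integral>\<^sup>+w. g w \<partial>cube_measure E)"
    using split[OF g] by simp
  finally show ?thesis .
qed



lemma Tm_insert:
  assumes "e \<notin> S" "e \<in> E"
  shows "Tm E (insert e S) mp mc w = Tm E S mp mc (w(e := mp e + mc e * w e))"
  using assms by (auto simp: Tm_def fun_eq_iff)

lemma key:
  fixes g :: "('e \<Rightarrow> real) \<Rightarrow> ennreal"
  assumes "finite S" "S \<subseteq> E" "\<forall>i\<in>S. 0 \<le> mp i \<and> 0 < mc i \<and> mp i + mc i \<le> 1"
    and "g \<in> borel_measurable (cube_measure E)"
  shows "(\<integral>\<^sup>+w. g (Tm E S mp mc w) \<partial>cube_measure E) \<le> ennreal (\<Prod>i\<in>S. 1 / mc i) * (\<integral>\<^sup>+w. g w \<partial>cube_measure E)"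
  using assms
proof (induction S arbitrary: g rule: finite_induct)
  case empty
  have "(\<integral>\<^sup>+w. g (Tm E {} mp mc w) \<partial>cube_measure E) = (\<integral>\<^sup>+w. g w \<partial>cube_measure E)"
  proof (rule nn_integral_cong)
    fix w assume "w \<in> space (cube_measure E)"
    then have "w \<in> extensional E" by (simp add: space_cube PiE_def)
    then have "Tm E {} mp mc w = w" by (auto simp: Tm_def fun_eq_iff extensional_def)
    then show "g (Tm E {} mp mc w) = g w" by simp
  qed
  then show ?case by simp
next
  case (insert e S)
  have e: "e \<in> E" and SE: "S \<subseteq> E" using insert.prems by auto
  have ge: "0 \<le> mp e" "0 < mc e" "mp e + mc e \<le> 1" using insert.prems by auto
  have goodS: "\<forall>i\<in>S. 0 \<le> mp i \<and> 0 < mc i \<and> mp i + mc i \<le> 1" using insert.prems by auto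
  have gm[measurable]: "g \<in> borel_measurable (cube_measure E)" by fact
  have gT: "(\<lambda>w. g (Tm E S mp mc w)) \<in> borel_measurable (cube_measure E)"
    by (rule measurable_compose[OF Tm_meas[OF goodS] gm])
  have pos: "0 \<le> (\<Prod>i\<in>S. 1 / mc i)" using goodS by (intro prod_nonneg) auto
  have "(\<integral>\<^sup>+w. g (Tm E (insert e S) mp mc w) \<partial>cube_measure E)
      = (\<integral>\<^sup>+w. g (Tm E S mp mc (w(e := mp e + mc e * w e))) \<partial>cube_measure E)"
    using insert.hyps e by (simp add: Tm_insert)
  also have "\<dots> \<le> ennreal (1 / mc e) * (\<integral>\<^sup>+w. g (Tm E S mp mc w) \<partial>cube_measure E)"
    by (rule one_coord[OF e ge gT])
  also have "\<dots> \<le> ennreal (1 / mc e) * (ennreal (\<Prod>i\<in>S. 1 / mc i) * (\<integral>\<^sup>+w. g w \<partial>cube_measure E))"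
    by (rule mult_left_mono[OF insert.IH[OF SE goodS gm]]) simp
  also have "\<dots> = ennreal (\<Prod>i\<in>insert e S. 1 / mc i) * (\<integral>\<^sup>+w. g w \<partial>cube_measure E)"
  proof -
    have "ennreal (1 / mc e) * ennreal (\<Prod>i\<in>S. 1 / mc i) = ennreal (\<Prod>i\<in>insert e S. 1 / mc i)"
      using insert.hyps ge pos by (simp add: ennreal_mult[symmetric])
    then show ?thesis by (simp add: mult.assoc[symmetric])
  qed
  finally show ?case .
qed



lemma comp_meas'[measurable]: "(\<lambda>w. w i) \<in> borel_measurable (cube_measure E)"
proof (cases "i \<in> E")
  case True then show ?thesis by (rule comp_meas)
next
  case False
  have "(\<lambda>w. undefined) \<in> borel_measurable (cube_measure E)" by simp
  moreover have "\<And>w. w \<in> space (cube_measure E) \<Longrightarrow> undefined = w i"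
    using False by (auto simp: space_cube PiE_def extensional_def)
  ultimately show ?thesis by (rule measurable_cong[THEN iffD1, rotated])
qed

definition Ucl :: "'e set \<Rightarrow> 'e set \<Rightarrow> ('e \<Rightarrow> real) \<Rightarrow> ('e \<Rightarrow> real) \<Rightarrow> ('e \<Rightarrow> real) \<Rightarrow> ('e \<Rightarrow> real)" where
  "Ucl E S mp mc w = (\<lambda>i\<in>E. if i \<in> S then max 0 (min 1 ((w i - mp i) / mc i)) else w i)"

lemma Ucl_meas[measurable]: "Ucl E S mp mc \<in> measurable (cube_measure E) (cube_measure E)"
proof -
  have "(\<lambda>w. \<lambda>i\<in>E. if i \<in> S then max 0 (min 1 ((w i - mp i) / mc i)) else w i) \<in> measurable (cube_measure E) (PiM E (\<lambda>_. unit_interval_measure))"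
  proof (rule measurable_restrict)
    fix i assume i: "i \<in> E"
    show "(\<lambda>w. if i \<in> S then max 0 (min 1 ((w i - mp i) / mc i)) else w i) \<in> measurable (cube_measure E) unit_interval_measure"
    proof (cases "i \<in> S")
      case False then show ?thesis using i
        by (simp add: cube_measure_def measurable_component_singleton)
    next
      case True
      have "(\<lambda>w. max 0 (min 1 ((w i - mp i) / mc i))) \<in> measurable (cube_measure E) lborel"
        unfolding measurable_lborel2 by measurable
      moreover have "(\<lambda>w. max 0 (min 1 ((w i - mp i) / mc i))) \<in> space (cube_measure E) \<rightarrow> {0..1}"
        by auto
      ultimately show ?thesis using True unfolding unit_interval_measure_def
        by (simp add: measurable_restrict_space2)
    qed
  qed
  then show ?thesis unfolding Ucl_def[abs_def] cube_measure_def by simp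
qed

definition good :: "'e set \<Rightarrow> ('e \<Rightarrow> real) \<Rightarrow> ('e \<Rightarrow> real) \<Rightarrow> bool" where
  "good S mp mc \<longleftrightarrow> (\<forall>i\<in>S. 0 \<le> mp i \<and> 0 < mc i \<and> mp i + mc i \<le> 1)"

lemma Tm_space: "good S mp mc \<Longrightarrow> w \<in> space (cube_measure E) \<Longrightarrow> Tm E S mp mc w \<in> space (cube_measure E)"
  using measurable_space[OF Tm_meas] unfolding good_def by blast

lemma Ucl_Tm:
  assumes g: "good S mp mc" and w: "w \<in> space (cube_measure E)"
  shows "Ucl E S mp mc (Tm E S mp mc w) = w"
proof
  fix i
  have we: "w \<in> extensional E" using w by (simp add: space_cube PiE_def)
  show "Ucl E S mp mc (Tm E S mp mc w) i = w i"
  proof (cases "i \<in> E")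
    case False then show ?thesis using we by (simp add: Ucl_def extensional_def)
  next
    case True
    then have "0 \<le> w i" "w i \<le> 1" using w by (auto simp: space_cube)
    moreover have "i \<in> S \<Longrightarrow> 0 < mc i" using g by (auto simp: good_def)
    ultimately show ?thesis using True by (cases "i \<in> S") (auto simp: Ucl_def Tm_def)
  qed
qed

lemma Tm_range:
  assumes g: "good S mp mc" and w: "w \<in> space (cube_measure E)" and SE: "S \<subseteq> E" and i: "i \<in> S"
  shows "mp i \<le> Tm E S mp mc w i \<and> Tm E S mp mc w i \<le> mp i + mc i"
proof -
  have iE: "i \<in> E" using SE i by auto
  then have "0 \<le> w i" "w i \<le> 1" using w by (auto simp: space_cube)
  moreover have "0 < mc i" using g i by (auto simp: good_def)
  ultimately have "0 \<le> mc i * w i" "mc i * w i \<le> mc i" by (simp_all add: mult_left_le)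
  then show ?thesis using iE i by (simp add: Tm_def)
qed

lemma Tm_Ucl:
  assumes g: "good S mp mc" and w: "w \<in> space (cube_measure E)"
    and r: "\<forall>i\<in>S. mp i \<le> w i \<and> w i \<le> mp i + mc i"
  shows "Tm E S mp mc (Ucl E S mp mc w) = w"
proof
  fix i
  have we: "w \<in> extensional E" using w by (simp add: space_cube PiE_def)
  show "Tm E S mp mc (Ucl E S mp mc w) i = w i"
  proof (cases "i \<in> E")
    case False then show ?thesis using we by (simp add: Tm_def extensional_def)
  next
    case True
    show ?thesis
    proof (cases "i \<in> S")
      case False then show ?thesis using True by (simp add: Tm_def Ucl_def)
    next
      case iS: True
      have c: "0 < mc i" using g iS by (auto simp: good_def)
      have "mp i \<le> w i" "w i \<le> mp i + mc i" using r iS by auto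
      then have "0 \<le> (w i - mp i) / mc i" "(w i - mp i) / mc i \<le> 1" using c by (auto simp: divide_simps)
      then have "max 0 (min 1 ((w i - mp i) / mc i)) = (w i - mp i) / mc i" by simp
      then show ?thesis using True iS c by (simp add: Tm_def Ucl_def)
    qed
  qed
qed

definition Gset where
  "Gset E S mp mc D = {w \<in> space (cube_measure E). (\<forall>i\<in>S. mp i \<le> w i \<and> w i \<le> mp i + mc i) \<and> Ucl E S mp mc w \<in> D}"

lemma Gset_meas:
  assumes D[measurable]: "D \<in> sets (cube_measure E)" and S: "finite S"
  shows "Gset E S mp mc D \<in> sets (cube_measure E)"
  unfolding Gset_def using S by measurable

lemma emeasure_le_Gset:
  assumes D: "D \<in> sets (cube_measure E)" and S: "finite S" "S \<subseteq> E" and g: "good S mp mc"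
  shows "emeasure (cube_measure E) D \<le> ennreal (\<Prod>i\<in>S. 1 / mc i) * emeasure (cube_measure E) (Gset E S mp mc D)"
proof -
  let ?P = "cube_measure E"
  have Gm: "Gset E S mp mc D \<in> sets ?P" by (rule Gset_meas[OF D S(1)])
  have "emeasure ?P D = (\<integral>\<^sup>+w. indicator D w \<partial>?P)" using D by simp
  also have "\<dots> = (\<integral>\<^sup>+w. indicator (Gset E S mp mc D) (Tm E S mp mc w) \<partial>?P)"
  proof (rule nn_integral_cong)
    fix w assume w: "w \<in> space ?P"
    have "Tm E S mp mc w \<in> Gset E S mp mc D \<longleftrightarrow> w \<in> D"
      using Tm_space[OF g w] Tm_range[OF g w S(2)] Ucl_Tm[OF g w] by (auto simp: Gset_def)
    then show "indicator D w = indicator (Gset E S mp mc D) (Tm E S mp mc w)"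
      by (simp add: indicator_def)
  qed
  also have "\<dots> \<le> ennreal (\<Prod>i\<in>S. 1 / mc i) * (\<integral>\<^sup>+w. indicator (Gset E S mp mc D) w \<partial>?P)"
    by (rule key[OF S g[unfolded good_def]]) (rule borel_measurable_indicator[OF Gm])
  also have "\<dots> = ennreal (\<Prod>i\<in>S. 1 / mc i) * emeasure ?P (Gset E S mp mc D)"
    using Gm by simp
  finally show ?thesis .
qed



theorem mainTheorem15:
  fixes E :: "'e set" and A B :: "('e \<Rightarrow> real) set" and a b :: real and s :: nat
    and \<Phi> :: "('e \<Rightarrow> real) \<Rightarrow> ('e \<Rightarrow> real)"
  assumes "countable E"
    and "A \<in> sets (cube_measure E)" and "B \<in> sets (cube_measure E)"
    and "0 < a" "a < 1" "0 < b" "b < 1"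
    and "\<Phi> ` A \<subseteq> B"
    and "\<Phi> \<in> measurable (restrict_space (cube_measure E) A) (restrict_space (cube_measure E) B)"
    and "\<forall>\<omega>'\<in>\<Phi> ` A. \<exists>S. S \<subseteq> E \<and> finite S \<and> card S \<le> s \<and>
           (\<forall>\<omega>\<in>A. \<Phi> \<omega> = \<omega>' \<longrightarrow>
              (\<forall>e\<in>E - S. \<omega> e = \<omega>' e) \<and>
              (\<exists>L\<subseteq>S. (\<forall>e\<in>L. \<omega> e = \<omega>' e / a) \<and>
                        (\<forall>e\<in>S - L. \<omega> e = (\<omega>' e - b) / (1 - b))))"
  shows "measure (cube_measure E) A \<le> (2 / min a (1 - b)) ^ s * measure (cube_measure E) B"
proof -
  let ?P = "cube_measure E"
  have A: "A \<in> sets ?P" and B: "B \<in> sets ?P" using assms by auto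
  have a: "0 < a" "a < 1" and b: "0 < b" "b < 1" using assms by auto
  note hyp = assms(10)
  have AB: "\<Phi> ` A \<subseteq> B" by fact
  have Phim0: "\<Phi> \<in> measurable (restrict_space ?P A) (restrict_space ?P B)" by fact
  interpret P: prob_space ?P by (rule prob_cube)
  define m where "m = min a (1 - b)"
  have m: "0 < m" "m \<le> a" "m \<le> 1 - b" "m \<le> 1" using a b by (auto simp: m_def)
  define mpL :: "'e set \<Rightarrow> 'e \<Rightarrow> real" where "mpL L = (\<lambda>i. if i \<in> L then 0 else b)" for L
  define mcL :: "'e set \<Rightarrow> 'e \<Rightarrow> real" where "mcL L = (\<lambda>i. if i \<in> L then a else 1 - b)" for L
  have goodL: "good S (mpL L) (mcL L)" for S L
    using a b by (auto simp: good_def mpL_def mcL_def)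
  define K where "K = {(S,L). S \<subseteq> E \<and> finite S \<and> card S \<le> s \<and> L \<subseteq> S}"
  have Kne: "K \<noteq> {}" proof - have "({},{}) \<in> K" unfolding K_def by simp then show ?thesis by blast qed
  have Kc: "countable K"
  proof (rule countable_subset)
    show "K \<subseteq> {S. finite S \<and> S \<subseteq> E} \<times> {S. finite S \<and> S \<subseteq> E}"
      unfolding K_def by (auto intro: finite_subset)
    show "countable ({S. finite S \<and> S \<subseteq> E} \<times> {S. finite S \<and> S \<subseteq> E})"
      using countable_Collect_finite_subset[OF \<open>countable E\<close>] by (intro countable_SIGMA) auto
  qed
  define kk where "kk n = from_nat_into K n" for n
  have kkK: "kk n \<in> K" for n unfolding kk_def using Kne by (rule from_nat_into)
  have kk_onto: "\<exists>n. kk n = k" if "k \<in> K" for k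
    using that range_from_nat_into[OF Kne Kc] unfolding kk_def by (metis rangeE)
  define SS where "SS n = fst (kk n)" for n
  define LL where "LL n = snd (kk n)" for n
  have SSE: "SS n \<subseteq> E" "finite (SS n)" "card (SS n) \<le> s" "LL n \<subseteq> SS n" for n
    using kkK[of n] by (auto simp: K_def SS_def LL_def split: prod.splits)
  define T where "T n = Tm E (SS n) (mpL (LL n)) (mcL (LL n))" for n
  define C where "C n = {w \<in> A. \<Phi> w = T n w}" for n
  define An where "An = disjointed C"
  define G where "G n = Gset E (SS n) (mpL (LL n)) (mcL (LL n)) (An n)" for n
  have Asp: "A \<subseteq> space ?P" using A by (rule sets.sets_into_space)
  have Bsp: "B \<subseteq> space ?P" using B by (rule sets.sets_into_space)
  have Cm: "C n \<in> sets ?P" for n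
  proof -
    let ?R = "restrict_space ?P A"
    have spR: "space ?R = A" using Asp by (auto simp: space_restrict_space)
    have Phim[measurable]: "\<Phi> \<in> measurable ?R ?P"
      using Phim0 by (simp add: measurable_restrict_space2_iff)
    have Tmm[measurable]: "T n \<in> measurable ?R ?P"
      unfolding T_def using Tm_meas[OF goodL[unfolded good_def]] by (rule measurable_restrict_space1)
    have [measurable]: "(\<lambda>w. \<Phi> w i) \<in> borel_measurable ?R" for i
      by (rule measurable_compose[OF Phim comp_meas'])
    have [measurable]: "(\<lambda>w. T n w i) \<in> borel_measurable ?R" for i
      by (rule measurable_compose[OF Tmm comp_meas'])
    have ext1: "\<Phi> w \<in> extensional E" if "w \<in> A" for w
      using that AB Bsp by (auto simp: space_cube PiE_def)
    have ext2: "T n w \<in> extensional E" for w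
      by (simp add: T_def Tm_def)
    have eq: "C n = {w \<in> space ?R. \<forall>i\<in>E. \<Phi> w i = T n w i}"
      unfolding spR C_def using ext1 ext2 by (auto intro: extensionalityI)
    have "{w \<in> space ?R. \<forall>i\<in>E. \<Phi> w i = T n w i} \<in> sets ?R"
    proof (cases "E = {}")
      case True then show ?thesis by simp
    next
      case False
      have "{w \<in> space ?R. \<forall>i\<in>E. \<Phi> w i = T n w i} = {w \<in> space ?R. \<forall>j::nat. \<Phi> w (from_nat_into E j) = T n w (from_nat_into E j)}"
        using range_from_nat_into[OF False \<open>countable E\<close>] by (metis (no_types, lifting) rangeE rangeI)
      also have "\<dots> \<in> sets ?R"
        by (rule sets.sets_Collect_countable_All) (rule measurable_equality_set; fact)
      finally show ?thesis .
    qed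
    then have "C n \<in> sets ?R" using eq by simp
    then show ?thesis using A by (simp add: sets_restrict_space_iff)
  qed
  have UC: "(\<Union>n. C n) = A"
  proof
    show "(\<Union>n. C n) \<subseteq> A" by (auto simp: C_def)
    show "A \<subseteq> (\<Union>n. C n)"
    proof
      fix w assume w: "w \<in> A"
      have "\<Phi> w \<in> \<Phi> ` A" using w by blast
      from hyp[rule_format, OF this] obtain S where S: "S \<subseteq> E" "finite S" "card S \<le> s" and
        H: "\<forall>\<omega>\<in>A. \<Phi> \<omega> = \<Phi> w \<longrightarrow> (\<forall>e\<in>E - S. \<omega> e = \<Phi> w e) \<and>
              (\<exists>L\<subseteq>S. (\<forall>e\<in>L. \<omega> e = \<Phi> w e / a) \<and> (\<forall>e\<in>S - L. \<omega> e = (\<Phi> w e - b) / (1 - b)))"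
        by blast
      from H[rule_format, OF w refl] obtain L where L: "L \<subseteq> S" "\<forall>e\<in>L. w e = \<Phi> w e / a"
        "\<forall>e\<in>S - L. w e = (\<Phi> w e - b) / (1 - b)" and off: "\<forall>e\<in>E - S. w e = \<Phi> w e" by blast
      have "(S,L) \<in> K" using S L by (simp add: K_def)
      then obtain n where n: "kk n = (S,L)" using kk_onto by blast
      then have SSn: "SS n = S" "LL n = L" by (simp_all add: SS_def LL_def)
      have ext1: "\<Phi> w \<in> extensional E" using w AB Bsp by (auto simp: space_cube PiE_def)
      have "\<Phi> w = T n w"
      proof (rule extensionalityI[OF ext1])
        show "T n w \<in> extensional E" by (simp add: T_def Tm_def)
        fix i assume i: "i \<in> E"
        show "\<Phi> w i = T n w i"
        proof (cases "i \<in> S")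
          case False then show ?thesis using off i SSn by (simp add: T_def Tm_def)
        next
          case iS: True
          show ?thesis
          proof (cases "i \<in> L")
            case True
            then have "w i = \<Phi> w i / a" using L by auto
            then have "\<Phi> w i = a * w i" using a by (simp add: field_simps)
            then show ?thesis using True iS i SSn by (simp add: T_def Tm_def mpL_def mcL_def)
          next
            case False
            then have "w i = (\<Phi> w i - b) / (1 - b)" using L iS by auto
            then have "\<Phi> w i = b + (1 - b) * w i" using b by (simp add: field_simps)
            then show ?thesis using False iS i SSn by (simp add: T_def Tm_def mpL_def mcL_def)
          qed
        qed
      qed
      then show "w \<in> (\<Union>n. C n)" using w by (auto simp: C_def)
    qed
  qed
  have Anm: "range An \<subseteq> sets ?P"
    unfolding An_def using Cm by (intro sets.range_disjointed_sets) auto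
  have Andisj: "disjoint_family An" unfolding An_def by (rule disjoint_family_disjointed)
  have UAn: "(\<Union>n. An n) = A" unfolding An_def UN_disjointed_eq by (rule UC)
  have AnC: "An n \<subseteq> C n" for n unfolding An_def by (rule disjointed_subset)
  have Gm: "G n \<in> sets ?P" for n
    unfolding G_def using Anm SSE by (intro Gset_meas) auto
  have c5: "emeasure ?P (An n) \<le> ennreal ((1/m)^s) * emeasure ?P (G n)" for n
  proof -
    have "emeasure ?P (An n) \<le> ennreal (\<Prod>i\<in>SS n. 1 / mcL (LL n) i) * emeasure ?P (G n)"
      unfolding G_def using Anm SSE goodL by (intro emeasure_le_Gset) auto
    also have "\<dots> \<le> ennreal ((1/m)^s) * emeasure ?P (G n)"
    proof (rule mult_right_mono)
      have "(\<Prod>i\<in>SS n. 1 / mcL (LL n) i) \<le> (1/m)^s"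
      proof (rule prod_le_power)
        fix i show "0 \<le> 1 / mcL (LL n) i \<and> 1 / mcL (LL n) i \<le> 1 / m"
          using m a b by (auto simp: mcL_def divide_simps)
      qed (use SSE m in auto)
      then show "ennreal (\<Prod>i\<in>SS n. 1 / mcL (LL n) i) \<le> ennreal ((1/m)^s)"
        by (rule ennreal_leI)
    qed simp
    finally show ?thesis .
  qed
  have c6: "(\<Sum>n. indicator (G n) w :: ennreal) \<le> 2^s * indicator B w" for w
  proof -
    define N where "N = {n. w \<in> G n}"
    define v where "v n = Ucl E (SS n) (mpL (LL n)) (mcL (LL n)) w" for n
    have vN: "v n \<in> An n \<and> v n \<in> A \<and> \<Phi> (v n) = w" if "n \<in> N" for n
    proof -
      from that have wG: "w \<in> space ?P" "\<forall>i\<in>SS n. mpL (LL n) i \<le> w i \<and> w i \<le> mpL (LL n) i + mcL (LL n) i" "v n \<in> An n"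
        by (auto simp: N_def G_def Gset_def v_def)
      have "T n (v n) = w" unfolding T_def v_def by (rule Tm_Ucl[OF goodL wG(1,2)])
      moreover have "v n \<in> C n" using wG(3) AnC by auto
      ultimately show ?thesis using wG(3) by (auto simp: C_def)
    qed
    have inj: "inj_on v N"
    proof (rule inj_onI)
      fix n n' assume nn: "n \<in> N" "n' \<in> N" "v n = v n'"
      have "v n \<in> An n" "v n' \<in> An n'" using vN[OF nn(1)] vN[OF nn(2)] by auto
      then have "v n \<in> An n \<inter> An n'" using nn(3) by simp
      then show "n = n'" using Andisj by (auto simp: disjoint_family_on_def)
    qed
    show ?thesis
    proof (cases "N = {}")
      case True
      then have "(\<lambda>n. indicator (G n) w :: ennreal) = (\<lambda>n. 0)" by (auto simp: N_def fun_eq_iff)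
      then show ?thesis by simp
    next
      case False
      then obtain n0 where "n0 \<in> N" by blast
      with vN have wA: "w \<in> \<Phi> ` A" by (metis image_eqI)
      then have wB: "w \<in> B" using AB by auto
      from hyp[rule_format, OF wA] obtain S0 where S0: "S0 \<subseteq> E" "finite S0" "card S0 \<le> s" and
        H: "\<forall>\<omega>\<in>A. \<Phi> \<omega> = w \<longrightarrow> (\<forall>e\<in>E - S0. \<omega> e = w e) \<and>
              (\<exists>L\<subseteq>S0. (\<forall>e\<in>L. \<omega> e = w e / a) \<and> (\<forall>e\<in>S0 - L. \<omega> e = (w e - b) / (1 - b)))"
        by blast
      define F where "F L = (\<lambda>e\<in>E. if e \<in> L then w e / a else if e \<in> S0 then (w e - b) / (1 - b) else w e)" for L
      have sub: "v ` N \<subseteq> F ` Pow S0"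
      proof
        fix x assume "x \<in> v ` N"
        then obtain n where n: "n \<in> N" "x = v n" by blast
        then have x: "x \<in> A" "\<Phi> x = w" using vN by auto
        from H[rule_format, OF x] obtain L where L: "L \<subseteq> S0" "\<forall>e\<in>L. x e = w e / a"
          "\<forall>e\<in>S0 - L. x e = (w e - b) / (1 - b)" and off: "\<forall>e\<in>E - S0. x e = w e" by blast
        have xe: "x \<in> extensional E" using x(1) Asp by (auto simp: space_cube PiE_def)
        have "x = F L"
        proof (rule extensionalityI[OF xe])
          show "F L \<in> extensional E" by (simp add: F_def)
          fix i assume "i \<in> E" then show "x i = F L i" using L off by (auto simp: F_def)
        qed
        then show "x \<in> F ` Pow S0" using L by auto
      qed
      have fin: "finite (F ` Pow S0)" using S0 by simp
      have "card (v ` N) \<le> card (F ` Pow S0)" by (rule card_mono[OF fin sub])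
      also have "\<dots> \<le> card (Pow S0)" by (rule card_image_le) (simp add: S0)
      also have "\<dots> = 2 ^ card S0" using S0 by (simp add: card_Pow)
      also have "\<dots> \<le> 2 ^ s" using S0 by (simp add: power_increasing)
      finally have c: "card (v ` N) \<le> 2^s" .
      have finN: "finite N" using finite_subset[OF sub fin] inj by (simp add: finite_image_iff)
      have cardN: "card N \<le> 2^s" using c inj by (simp add: card_image)
      have "(\<Sum>n. indicator (G n) w :: ennreal) = (\<Sum>n\<in>N. indicator (G n) w)"
        by (rule suminf_finite[OF finN]) (auto simp: N_def)
      also have "\<dots> = (\<Sum>n\<in>N. 1)" by (rule sum.cong) (auto simp: N_def)
      also have "\<dots> = of_nat (card N)" by simp
      also have "\<dots> \<le> of_nat (2^s)" using cardN by (rule of_nat_mono)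
      also have "\<dots> = 2^s * indicator B w" using wB by simp
      finally show ?thesis .
    qed
  qed
  have "emeasure ?P A = (\<Sum>n. emeasure ?P (An n))"
    using suminf_emeasure[OF Anm Andisj] UAn by simp
  also have "\<dots> \<le> (\<Sum>n. ennreal ((1/m)^s) * emeasure ?P (G n))"
    by (intro suminf_le c5 summableI)
  also have "\<dots> = ennreal ((1/m)^s) * (\<Sum>n. emeasure ?P (G n))"
    by simp
  also have "(\<Sum>n. emeasure ?P (G n)) = (\<integral>\<^sup>+w. (\<Sum>n. indicator (G n) w) \<partial>?P)"
    using Gm by (subst nn_integral_suminf) auto
  also have "\<dots> \<le> (\<integral>\<^sup>+w. 2^s * indicator B w \<partial>?P)"
    by (intro nn_integral_mono c6)
  also have "\<dots> = 2^s * emeasure ?P B"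
    using B by (simp add: nn_integral_cmult_indicator)
  finally have le: "emeasure ?P A \<le> ennreal ((1/m)^s) * (2^s * emeasure ?P B)"
    by (simp add: mult_left_mono)
  have e2: "(2::ennreal)^s = ennreal (2^s)" using ennreal_power[of 2 s] by simp
  have pB: "0 \<le> measure ?P B" by simp
  have "ennreal ((1/m)^s) * (2^s * emeasure ?P B) = ennreal ((1/m)^s) * (ennreal (2^s) * ennreal (measure ?P B))"
    by (simp add: e2 P.emeasure_eq_measure)
  also have "\<dots> = ennreal ((1/m)^s * (2^s * measure ?P B))"
    using m pB by (simp add: ennreal_mult)
  also have "(1/m)^s * (2^s * measure ?P B) = (2 / m)^s * measure ?P B"
    by (simp add: power_divide)
  finally have "ennreal ((1/m)^s) * (2^s * emeasure ?P B) = ennreal ((2 / m)^s * measure ?P B)" .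
  with le have "ennreal (measure ?P A) \<le> ennreal ((2 / m)^s * measure ?P B)"
    by (simp add: P.emeasure_eq_measure)
  then show ?thesis
    using m by (simp add: m_def)
qed


end
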